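(* The metric space $L_\omega$ satisfies $\operatorname{trasdim} L_\omega=\omega$, where $\omega$ is the first infinite ordinal.
   Context: Let $X=\bigsqcup_{i=1}^\infty\mathbb Z^i$ (disjoint union). For $a=(a_1,\dots,a_l)\in\mathbb Z^l$ and $b=(b_1,\dots,b_k)\in\mathbb Z^k$ with $l\le k$, let $a'=(a_1,\dots,a_l,0,\dots,0)\in\mathbb Z^k$, let $c=0$ if $l=k$ and $c=l+(l+1)+\dots+(k-1)$ if $l<k$, and set $d_\infty(a,b)=d_\infty(b,a)=\max\{d(a',b),c\}$, where $d$ is the sup-metric $d(x,y)=\max_j|x_j-y_j|$ on $\mathbb Z^k$. $L_\infty=(X,d_\infty)$, and $L_\omega=\bigcup_{k=1}^\infty(k\mathbb Z)^k\subset L_\infty$ with the restricted metric, where $k\mathbb Z=\{kl:l\in\mathbb Z\}$ and $(k\mathbb Z)^k\subset\mathbb Z^k$. A family $\mathcal A$ of subsets is uniformly bounded if there is $C>0$ with $\operatorname{diam}A\le C$ for all $A\in\mathcal A$; it is $r$-disjoint if $d(A_1,A_2)\ge r$ for all distinct $A_1,A_2\in\mathcal A$. For a set $L$, $\mathrm{Fin}\,L$ is the collection of finite nonempty subsets of $L$. For $M\subset \mathrm{Fin}\,L$ and $\sigma\in\{\emptyset\}\cup\mathrm{Fin}\,L$, $M^\sigma=\{\tau\in\mathrm{Fin}\,L:\sigma\cup\tau\in M,\ \sigma\cap\tau=\emptyset\}$, and $M^a=M^{\{a\}}$. The ordinal $\operatorname{Ord}M$: $\operatorname{Ord}M=0$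 iff $M=\emptyset$; $\operatorname{Ord}M\le\alpha$ iff $\operatorname{Ord}M^a<\alpha$ for every $a\in L$; $\operatorname{Ord}M=\alpha$ iff $\operatorname{Ord}M\le\alpha$ and not $\operatorname{Ord}M<\alpha$; $\operatorname{Ord}M=\infty$ iff $\operatorname{Ord} M\le\alpha$ for no ordinal $\alpha$. For a metric space $(X,d)$, $A(X,d)$ is the set of $\sigma\in\mathrm{Fin}\,\mathbb N$ such that there do NOT exist uniformly bounded families $\mathcal V_i$, $i\in\sigma$, with $\bigcup_{i\in\sigma}\mathcal V_i$ covering $X$ and each $\mathcal V_i$ being $i$-disjoint. Define $\operatorname{trasdim}X=\operatorname{Ord}A(X,d)$, except $\operatorname{trasdim}X=-1$ iff $X$ is bounded. *)

theory Defs
  imports Main "HOL-Library.Extended_Nat"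
begin

definition Fin :: "'a set \<Rightarrow> 'a set set" where
  "Fin L = {\<sigma>. \<sigma> \<subseteq> L \<and> finite \<sigma> \<and> \<sigma> \<noteq> {}}"

definition Mup :: "'a set \<Rightarrow> 'a set set \<Rightarrow> 'a set \<Rightarrow> 'a set set" where
  "Mup L M \<sigma> = {\<tau> \<in> Fin L. \<sigma> \<union> \<tau> \<in> M \<and> \<sigma> \<inter> \<tau> = {}}"

inductive Ord_le :: "'a set \<Rightarrow> 'a set set \<Rightarrow> 'o::wellorder \<Rightarrow> bool" for L where
  empty: "M = {} \<Longrightarrow> Ord_le L M \<alpha>"
| step: "(\<forall>a\<in>L. \<exists>\<beta><\<alpha>. Ord_le L (Mup L M {a}) \<beta>) \<Longrightarrow> Ord_le L M \<alpha>"

definition Ord_lt :: "'a set \<Rightarrow> 'a set set \<Rightarrow> 'o::wellorder \<Rightarrow> bool" where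
  "Ord_lt L M \<alpha> \<longleftrightarrow> (\<exists>\<beta><\<alpha>. Ord_le L M \<beta>)"

definition Ord_eq :: "'a set \<Rightarrow> 'a set set \<Rightarrow> 'o::wellorder \<Rightarrow> bool" where
  "Ord_eq L M \<alpha> \<longleftrightarrow> Ord_le L M \<alpha> \<and> \<not> Ord_lt L M \<alpha>"

definition Npos :: "nat set" where "Npos = {i. i \<ge> 1}"

definition unif_bounded :: "('x \<Rightarrow> 'x \<Rightarrow> int) \<Rightarrow> 'x set set \<Rightarrow> bool" where
  "unif_bounded d \<V> \<longleftrightarrow> (\<exists>C>0. \<forall>A\<in>\<V>. \<forall>x\<in>A. \<forall>y\<in>A. d x y \<le> C)"

definition r_disjoint :: "('x \<Rightarrow> 'x \<Rightarrow> int) \<Rightarrow> nat \<Rightarrow> 'x set set \<Rightarrow> bool" where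
  "r_disjoint d r \<V> \<longleftrightarrow>
     (\<forall>A1\<in>\<V>. \<forall>A2\<in>\<V>. A1 \<noteq> A2 \<longrightarrow> (\<forall>x\<in>A1. \<forall>y\<in>A2. d x y \<ge> int r))"

definition Aset :: "'x set \<Rightarrow> ('x \<Rightarrow> 'x \<Rightarrow> int) \<Rightarrow> nat set set" where
  "Aset S d = {\<sigma> \<in> Fin Npos. \<not> (\<exists>\<V> :: nat \<Rightarrow> 'x set set.
        (\<forall>i\<in>\<sigma>. \<V> i \<subseteq> Pow S \<and> unif_bounded d (\<V> i) \<and> r_disjoint d i (\<V> i))
        \<and> S \<subseteq> \<Union>(\<Union>i\<in>\<sigma>. \<V> i))}"

definition bounded_space :: "'x set \<Rightarrow> ('x \<Rightarrow> 'x \<Rightarrow> int) \<Rightarrow> bool" where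
  "bounded_space S d \<longleftrightarrow> (\<exists>C. \<forall>x\<in>S. \<forall>y\<in>S. d x y \<le> C)"

text \<open>trasdim (S,d) = omega, where omega is \<infinity> :: enat (the ordinals below omega
  being the naturals).  trasdim = -1 iff the space is bounded.\<close>
definition trasdim_eq_omega :: "'x set \<Rightarrow> ('x \<Rightarrow> 'x \<Rightarrow> int) \<Rightarrow> bool" where
  "trasdim_eq_omega S d \<longleftrightarrow> \<not> bounded_space S d \<and> Ord_eq Npos (Aset S d) (\<infinity> :: enat)"

text \<open>A point of Z^k (k \<ge> 1) is an int list of length k.\<close>
definition Xinf :: "int list set" where
  "Xinf = {a. length a \<ge> 1}"

definition supdist :: "int list \<Rightarrow> int list \<Rightarrow> int" where
  "supdist x y = Max (insert 0 {\<bar>x ! j - y ! j\<bar> | j. j < length y})"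

definition dinf_aux :: "int list \<Rightarrow> int list \<Rightarrow> int" where
  "dinf_aux a b = (let l = length a; k = length b in
      max (supdist (a @ replicate (k - l) 0) b) (int (\<Sum>{l..<k})))"

definition dinf :: "int list \<Rightarrow> int list \<Rightarrow> int" where
  "dinf a b = (if length a \<le> length b then dinf_aux a b else dinf_aux b a)"

definition Lomega :: "int list set" where
  "Lomega = {a. length a \<ge> 1 \<and> (\<forall>j<length a. int (length a) dvd a ! j)}"

end

theory Submission
  imports Defs "HOL-Analysis.Brouwer_Fixpoint"
begin


definition pad :: "int list \<Rightarrow> nat \<Rightarrow> int" where
  "pad x j = (if j < length x then x ! j else 0)"

lemma supdist_fin: "finite {\<bar>x ! j - y ! j\<bar> | j. j < length y}"
proof -
  have "{\<bar>x ! j - y ! j\<bar> | j. j < length y} = (\<lambda>j. \<bar>x ! j - y ! j\<bar>) ` {..<length y}" by auto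
  then show ?thesis by simp
qed

lemma supdist_ge: "j < length b \<Longrightarrow> \<bar>a ! j - b ! j\<bar> \<le> supdist a b"
  unfolding supdist_def using supdist_fin[of a b] by (intro Max_ge) auto

lemma supdist_nonneg: "0 \<le> supdist a b"
  unfolding supdist_def using supdist_fin[of a b] by (intro Max_ge) auto

lemma supdist_le: "0 \<le> B \<Longrightarrow> (\<And>j. j < length b \<Longrightarrow> \<bar>a ! j - b ! j\<bar> \<le> B) \<Longrightarrow> supdist a b \<le> B"
  unfolding supdist_def using supdist_fin[of a b] by (subst Max_le_iff) auto

lemma dinf_aux_ge_pad:
  assumes "length a \<le> length b"
  shows "\<bar>pad a j - pad b j\<bar> \<le> dinf_aux a b"
proof (cases "j < length b")
  case True
  have "(a @ replicate (length b - length a) 0) ! j = pad a j"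
    using True assms by (auto simp: pad_def nth_append)
  moreover have "length (a @ replicate (length b - length a) 0) = length b" using assms by simp
  ultimately have "\<bar>pad a j - pad b j\<bar> \<le> supdist (a @ replicate (length b - length a) 0) b"
    using supdist_ge[OF True, of "a @ replicate (length b - length a) 0"] True by (simp add: pad_def)
  then show ?thesis unfolding dinf_aux_def Let_def by simp
next
  case False
  then have "pad a j = 0" "pad b j = 0" using assms by (auto simp: pad_def)
  then show ?thesis unfolding dinf_aux_def Let_def using supdist_nonneg by (simp add: max.coboundedI1)
qed

lemma dinf_ge_pad: "\<bar>pad a j - pad b j\<bar> \<le> dinf a b"
proof (cases "length a \<le> length b")
  case True then show ?thesis using dinf_aux_ge_pad[OF True] by (simp add: dinf_def)
next
  case False
  then have "length b \<le> length a" by simp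
  from dinf_aux_ge_pad[OF this, of j] False show ?thesis by (simp add: dinf_def abs_minus_commute)
qed

lemma dinf_nonneg: "0 \<le> dinf a b"
  using dinf_ge_pad[of a 0 b] by linarith

lemma sum_le_sq: "(\<Sum>{l..<k::nat}) \<le> k * k"
proof -
  have "(\<Sum>{l..<k}) \<le> card {l..<k} * k" using sum_bounded_above[of "{l..<k}" "\<lambda>x. x" k] by auto
  also have "\<dots> \<le> k * k" by simp
  finally show ?thesis .
qed

lemma dinf_aux_le:
  assumes "length a \<le> length b" "0 \<le> B" "\<And>j. \<bar>pad a j - pad b j\<bar> \<le> B"
  shows "dinf_aux a b \<le> B + int (length b * length b)"
proof -
  have "supdist (a @ replicate (length b - length a) 0) b \<le> B"
  proof (rule supdist_le[OF assms(2)])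
    fix j assume j: "j < length b"
    have "(a @ replicate (length b - length a) 0) ! j = pad a j"
      using j assms by (auto simp: pad_def nth_append)
    then show "\<bar>(a @ replicate (length b - length a) 0) ! j - b ! j\<bar> \<le> B"
      using assms(3)[of j] j by (simp add: pad_def)
  qed
  moreover have "int (\<Sum>{length a..<length b}) \<le> int (length b * length b)"
    using sum_le_sq by (simp only: of_nat_le_iff)
  ultimately show ?thesis unfolding dinf_aux_def Let_def using assms(2) by linarith
qed

lemma dinf_le:
  assumes "0 \<le> B" "\<And>j. \<bar>pad a j - pad b j\<bar> \<le> B"
  shows "dinf a b \<le> B + int (length a * length a) + int (length b * length b)"
proof (cases "length a \<le> length b")
  case True
  have X: "dinf_aux a b \<le> B + int (length b * length b)" by (rule dinf_aux_le[OF True assms])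
  have Y: "0 \<le> int (length a * length a)" by (rule of_nat_0_le_iff)
  have "dinf a b = dinf_aux a b" using True by (simp add: dinf_def)
  then show ?thesis using X Y by linarith
next
  case False
  then have F: "length b \<le> length a" by simp
  have X: "dinf_aux b a \<le> B + int (length a * length a)"
    by (rule dinf_aux_le[OF F assms(1)]) (simp add: assms(2) abs_minus_commute)
  have Y: "0 \<le> int (length b * length b)" by (rule of_nat_0_le_iff)
  have "dinf a b = dinf_aux b a" using False by (simp add: dinf_def)
  then show ?thesis using X Y by linarith
qed

lemma dinf_same_len: "length a = length b \<Longrightarrow> dinf a b = max (supdist a b) 0"
  by (simp add: dinf_def dinf_aux_def Let_def)

lemma dinf_self: "dinf a a = 0"
  using dinf_same_len[of a a] supdist_le[of 0 a a] supdist_nonneg[of a a] by simp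

lemma dinf_Lomega_sep:
  assumes "x \<in> Lomega" "y \<in> Lomega" "x \<noteq> y"
  shows "int (min (length x) (length y)) \<le> dinf x y"
proof -
  { fix x y assume x: "x \<in> Lomega" and y: "y \<in> Lomega" and ne: "x \<noteq> y" and le: "length x \<le> length y"
    have "int (length x) \<le> dinf_aux x y"
    proof (cases "length x = length y")
      case True
      have "\<exists>j<length y. x ! j \<noteq> y ! j"
      proof (rule ccontr)
        assume "\<not> (\<exists>j<length y. x ! j \<noteq> y ! j)"
        then have "x = y" using True by (intro nth_equalityI) auto
        with ne show False by simp
      qed
      then obtain j where j: "j < length y" "x ! j \<noteq> y ! j" by blast
      have "int (length y) dvd x ! j" "int (length y) dvd y ! j" using x y j True by (auto simp: Lomega_def)
      then have "int (length y) dvd (x ! j - y ! j)" by simp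
      then have "\<bar>int (length y)\<bar> \<le> \<bar>x ! j - y ! j\<bar>" using j(2) dvd_imp_le_int[of "x ! j - y ! j" "int (length y)"] by simp
      then have "int (length y) \<le> \<bar>x ! j - y ! j\<bar>" by simp
      also have "\<dots> \<le> supdist x y" by (rule supdist_ge[OF j(1)])
      finally show ?thesis using True by (simp add: dinf_aux_def Let_def)
    next
      case False
      then have "length x \<in> {length x..<length y}" using le by simp
      then have "length x \<le> \<Sum>{length x..<length y}" by (intro member_le_sum) auto
      then have "int (length x) \<le> int (\<Sum>{length x..<length y})" by (simp only: of_nat_le_iff)
      then show ?thesis unfolding dinf_aux_def Let_def by (simp only: le_max_iff_disj, simp)
    qed }
  note * = this
  show ?thesis
  proof (cases "length x \<le> length y")
    case True then show ?thesis using *[OF assms True] by (simp add: dinf_def)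
  next
    case False then show ?thesis using *[of y x] assms by (simp add: dinf_def)
  qed
qed



lemma Mup_Fin: "Mup L M {a} \<subseteq> Fin L"
  by (auto simp: Mup_def)

lemma Ord_le_card:
  assumes "M \<subseteq> Fin L" "\<forall>\<tau>\<in>M. card \<tau> \<le> n"
  shows "Ord_le L M (enat n)"
  using assms
proof (induction n arbitrary: M)
  case 0
  have "M = {}"
  proof (rule ccontr)
    assume "M \<noteq> {}"
    then obtain x where x: "x \<in> M" by blast
    then have "finite x" "x \<noteq> {}" using 0 unfolding Fin_def by blast+
    moreover have "card x = 0" using x 0 by blast
    ultimately show False by simp
  qed
  then show ?case by (rule Ord_le.empty)
next
  case (Suc n)
  show ?case
  proof (rule Ord_le.step, intro ballI exI conjI)
    fix a assume "a \<in> L"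
    show "enat n < enat (Suc n)" by simp
    show "Ord_le L (Mup L M {a}) (enat n)"
    proof (rule Suc.IH[OF Mup_Fin], intro ballI)
      fix \<tau> assume t: "\<tau> \<in> Mup L M {a}"
      then have "{a} \<union> \<tau> \<in> M" "a \<notin> \<tau>" "finite \<tau>" by (auto simp: Mup_def Fin_def)
      then have "card ({a} \<union> \<tau>) \<le> Suc n" using Suc.prems by blast
      then show "card \<tau> \<le> n" using \<open>a \<notin> \<tau>\<close> \<open>finite \<tau>\<close> by simp
    qed
  qed
qed

lemma Ord_le_card_conv:
  assumes "Ord_le L M \<alpha>"
  shows "M \<subseteq> Fin L \<Longrightarrow> \<forall>\<tau>\<in>M. enat (card \<tau>) \<le> \<alpha>"
  using assms
proof (induction rule: Ord_le.induct)
  case (empty M \<alpha>)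
  then show ?case by simp
next
  case (step \<alpha> M)
  show ?case
  proof
    fix \<tau> assume t: "\<tau> \<in> M"
    then have tF: "\<tau> \<subseteq> L" "finite \<tau>" "\<tau> \<noteq> {}" using step.prems by (auto simp: Fin_def)
    then obtain a where a: "a \<in> \<tau>" by blast
    with tF have aL: "a \<in> L" by blast
    from step.IH aL have "\<exists>\<beta><\<alpha>. Ord_le L (Mup L M {a}) \<beta> \<and> (Mup L M {a} \<subseteq> Fin L \<longrightarrow> (\<forall>\<tau>\<in>Mup L M {a}. enat (card \<tau>) \<le> \<beta>))"
      by (rule bspec)
    then obtain \<beta> where b0: "\<beta> < \<alpha>" "Ord_le L (Mup L M {a}) \<beta>"
      "Mup L M {a} \<subseteq> Fin L \<longrightarrow> (\<forall>\<tau>\<in>Mup L M {a}. enat (card \<tau>) \<le> \<beta>)" by blast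
    have b: "\<beta> < \<alpha>" "\<forall>\<tau>\<in>Mup L M {a}. enat (card \<tau>) \<le> \<beta>"
      using b0 Mup_Fin[of L M a] by simp_all
    show "enat (card \<tau>) \<le> \<alpha>"
    proof (cases "\<tau> = {a}")
      case True
      have "enat 0 < \<alpha>" using b(1) by (metis i0_lb order_le_less_trans zero_enat_def)
      then show ?thesis using True by (simp add: Suc_ile_eq)
    next
      case False
      let ?t = "\<tau> - {a}"
      have "?t \<in> Mup L M {a}" using False a tF t by (auto simp: Mup_def Fin_def insert_absorb)
      then have "enat (card ?t) \<le> \<beta>" using b(2) by blast
      moreover have "card \<tau> = Suc (card ?t)" by (rule card_Suc_Diff1[OF tF(2) a, symmetric])
      moreover have "enat (card ?t) < \<alpha>" using calculation(1) b(1) by (rule order_le_less_trans)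
      ultimately show ?thesis by (simp add: Suc_ile_eq)
    qed
  qed
qed



lemma div_bounds:
  fixes u M :: int
  assumes "M > 0"
  shows "M * (u div M) \<le> u" "u < M * (u div M) + M"
proof -
  have e: "M * (u div M) + u mod M = u" by (rule mult_div_mod_eq)
  have "0 \<le> u mod M" "u mod M < M" using assms by simp_all
  then show "M * (u div M) \<le> u" "u < M * (u div M) + M" using e by linarith+
qed

lemma div_eq_close:
  fixes u v M :: int
  assumes "M > 0" "u div M = v div M"
  shows "\<bar>u - v\<bar> \<le> M"
proof -
  note div_bounds[OF assms(1), of u] div_bounds[OF assms(1), of v]
  moreover
  ultimately show ?thesis using assms(2) by auto
qed

lemma div_far:
  fixes u v M :: int
  assumes "M > 0" "u div M \<noteq> v div M" "(u div M) mod 2 = (v div M) mod 2"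
  shows "M < \<bar>u - v\<bar>"
proof -
  note bu = div_bounds[OF assms(1), of u]
  note bv = div_bounds[OF assms(1), of v]
  have "2 dvd (u div M - v div M)" using assms(3) by (simp add: mod_eq_dvd_iff)
  then obtain k where k: "u div M - v div M = 2 * k" by (auto simp only: dvd_def)
  have "k \<noteq> 0" using k assms(2) by auto
  then have "k \<ge> 1 \<or> k \<le> -1" by linarith
  then have "u div M - v div M \<ge> 2 \<or> u div M - v div M \<le> -2" using k by linarith
  then show ?thesis
  proof
    assume "u div M - v div M \<ge> 2"
    then have "M * (u div M - v div M) \<ge> M * 2" using assms(1) by (intro mult_left_mono) auto
    then have "M * (u div M) \<ge> M * (v div M) + 2 * M" by (simp add: algebra_simps)
    then show ?thesis using bu bv by linarith
  next
    assume "u div M - v div M \<le> -2"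
    then have "M * (v div M - u div M) \<ge> M * 2" using assms(1) by (intro mult_left_mono) auto
    then have "M * (v div M) \<ge> M * (u div M) + 2 * M" by (simp add: algebra_simps)
    then show ?thesis using bu bv by linarith
  qed
qed



lemma not_in_Aset:
  assumes sF: "\<sigma> \<in> Fin Npos" and a: "a \<in> \<sigma>" and cd: "2 ^ a < card \<sigma>"
  shows "\<sigma> \<notin> Aset Lomega dinf"
proof -
  have fin: "finite \<sigma>" and sN: "\<sigma> \<subseteq> Npos" using sF by (auto simp: Fin_def)
  define R where "R = Max \<sigma>"
  have iR: "i \<le> R" if "i \<in> \<sigma>" for i using fin that by (simp add: R_def)
  have a1: "1 \<le> a" using a sN by (auto simp: Npos_def)
  define M :: int where "M = int R"
  have M0: "M > 0" using iR[OF a] a1 by (simp add: M_def)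
  define cidx where "cidx x = (\<lambda>j. pad x j div M)" for x
  define col where "col x = (\<lambda>j. if j < a then cidx x j mod 2 else 0)" for x
  define Cs where "Cs = (\<lambda>S j. if j \<in> S then 1 else (0::int)) ` Pow {..<a}"
  have colCs: "col x \<in> Cs" for x
    unfolding Cs_def
  proof (rule image_eqI[where x = "{j. j < a \<and> cidx x j mod 2 = 1}"])
    show "col x = (\<lambda>j. if j \<in> {j. j < a \<and> cidx x j mod 2 = 1} then 1 else 0)"
    proof
      fix j
      have "cidx x j mod 2 = 0 \<or> cidx x j mod 2 = 1" by auto
      then show "col x j = (if j \<in> {j. j < a \<and> cidx x j mod 2 = 1} then 1 else 0)"
        by (auto simp: col_def)
    qed
  qed auto
  have finCs: "finite Cs" by (simp add: Cs_def)
  have "card Cs \<le> card (Pow {..<a::nat})" unfolding Cs_def by (rule card_image_le) simp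
  also have "\<dots> = 2 ^ a" by (simp add: card_Pow)
  also have "\<dots> \<le> card (\<sigma> - {a})" using cd a fin by simp
  finally have "card Cs \<le> card (\<sigma> - {a})" .
  then obtain e where e: "inj_on e Cs" "e ` Cs \<subseteq> \<sigma> - {a}"
    using card_le_inj[OF finCs] fin by blast
  define cell where "cell x = {y \<in> Lomega. length y < a \<and> cidx y = cidx x}" for x
  define V where "V i = (if i = a then {{x} | x. x \<in> Lomega \<and> a \<le> length x}
      else {cell x | x. x \<in> Lomega \<and> length x < a \<and> e (col x) = i})" for i
  have colc: "col y = col x" if "cidx y = cidx x" for x y unfolding col_def by (simp only: that)
  have good: "V i \<subseteq> Pow Lomega \<and> unif_bounded dinf (V i) \<and> r_disjoint dinf i (V i)" if i: "i \<in> \<sigma>" for i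
  proof (cases "i = a")
    case True
    have "V i \<subseteq> Pow Lomega" using True by (auto simp: V_def)
    moreover have "unif_bounded dinf (V i)"
      unfolding unif_bounded_def using True by (intro exI[of _ 1]) (auto simp: V_def dinf_self)
    moreover have "r_disjoint dinf i (V i)"
      unfolding r_disjoint_def
    proof (intro ballI impI)
      fix A1 A2 x y assume A: "A1 \<in> V i" "A2 \<in> V i" "A1 \<noteq> A2" "x \<in> A1" "y \<in> A2"
      then have "x \<in> Lomega" "y \<in> Lomega" "x \<noteq> y" "a \<le> length x" "a \<le> length y"
        using True by (auto simp: V_def)
      then show "int i \<le> dinf x y" using dinf_Lomega_sep[of x y] True by linarith
    qed
    ultimately show ?thesis by blast
  next
    case False
    have "V i \<subseteq> Pow Lomega" using False by (auto simp: V_def cell_def)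
    moreover have "unif_bounded dinf (V i)"
      unfolding unif_bounded_def
    proof (intro exI[of _ "M + 2 * int (a * a) + 1"] conjI ballI)
      show "0 < M + 2 * int (a * a) + 1" using M0 by simp
      fix A y1 y2 assume A: "A \<in> V i" "y1 \<in> A" "y2 \<in> A"
      then obtain x where "A = cell x" using False by (auto simp: V_def)
      then have c: "cidx y1 = cidx x" "cidx y2 = cidx x" "length y1 < a" "length y2 < a"
        using A by (auto simp: cell_def)
      have "\<bar>pad y1 j - pad y2 j\<bar> \<le> M" for j
        using div_eq_close[OF M0] fun_cong[OF c(1), of j] fun_cong[OF c(2), of j]
        by (simp add: cidx_def)
      then have "dinf y1 y2 \<le> M + int (length y1 * length y1) + int (length y2 * length y2)"
        using M0 by (intro dinf_le) auto
      moreover have "length y1 * length y1 \<le> a * a" "length y2 * length y2 \<le> a * a"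
        using c by (simp_all add: mult_le_mono less_imp_le)
      ultimately show "dinf y1 y2 \<le> M + 2 * int (a * a) + 1"
        by (smt (verit) of_nat_le_iff)
    qed
    moreover have "r_disjoint dinf i (V i)"
      unfolding r_disjoint_def
    proof (intro ballI impI)
      fix A1 A2 y1 y2 assume A: "A1 \<in> V i" "A2 \<in> V i" "A1 \<noteq> A2" "y1 \<in> A1" "y2 \<in> A2"
      obtain x1 where x1: "A1 = cell x1" "e (col x1) = i" using A False by (auto simp: V_def)
      obtain x2 where x2: "A2 = cell x2" "e (col x2) = i" using A False by (auto simp: V_def)
      have cc: "col x1 = col x2" using e(1) colCs x1(2) x2(2) by (metis inj_onD)
      have nc: "cidx x1 \<noteq> cidx x2" using A(3) x1(1) x2(1) by (auto simp: cell_def)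
      have c: "cidx y1 = cidx x1" "cidx y2 = cidx x2" "length y1 < a" "length y2 < a"
        using A x1 x2 by (auto simp: cell_def)
      obtain j where j: "cidx y1 j \<noteq> cidx y2 j" using nc c by auto
      have ja: "j < a"
      proof (rule ccontr)
        assume "\<not> j < a"
        then have "pad y1 j = 0" "pad y2 j = 0" using c by (auto simp: pad_def)
        then show False using j by (simp add: cidx_def)
      qed
      have "col y1 j = col y2 j" using cc colc[OF c(1)] colc[OF c(2)] by simp
      then have "cidx y1 j mod 2 = cidx y2 j mod 2" using ja by (simp add: col_def)
      then have "M < \<bar>pad y1 j - pad y2 j\<bar>" using div_far[OF M0] j by (simp add: cidx_def)
      moreover have "int i \<le> M" using iR[OF i] by (simp add: M_def)
      ultimately show "int i \<le> dinf y1 y2" using dinf_ge_pad[of y1 j y2] by linarith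
    qed
    ultimately show ?thesis by blast
  qed
  have cover: "Lomega \<subseteq> \<Union>(\<Union>i\<in>\<sigma>. V i)"
  proof
    fix x assume x: "x \<in> Lomega"
    show "x \<in> \<Union>(\<Union>i\<in>\<sigma>. V i)"
    proof (cases "a \<le> length x")
      case True
      then have "{x} \<in> V a" using x by (auto simp: V_def)
      then show ?thesis using a by blast
    next
      case False
      have ei: "e (col x) \<in> \<sigma> - {a}" using e(2) colCs by blast
      then have "cell x \<in> V (e (col x))" using x False by (auto simp: V_def)
      moreover have "x \<in> cell x" using x False by (simp add: cell_def)
      ultimately show ?thesis using ei by blast
    qed
  qed
  show ?thesis unfolding Aset_def using good cover by blast
qed



lemma in_Aset:
  assumes m: "1 \<le> m"
  shows "{2*m+1..3*m} \<in> Aset Lomega dinf"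
proof -
  define \<sigma> where "\<sigma> = {2*m+1..3*m}"
  have sF: "\<sigma> \<in> Fin Npos" using m by (auto simp: \<sigma>_def Fin_def Npos_def)
  have "\<not> (\<exists>V :: nat \<Rightarrow> int list set set.
        (\<forall>i\<in>\<sigma>. V i \<subseteq> Pow Lomega \<and> unif_bounded dinf (V i) \<and> r_disjoint dinf i (V i))
        \<and> Lomega \<subseteq> \<Union>(\<Union>i\<in>\<sigma>. V i))"
  proof
    assume "\<exists>V :: nat \<Rightarrow> int list set set.
        (\<forall>i\<in>\<sigma>. V i \<subseteq> Pow Lomega \<and> unif_bounded dinf (V i) \<and> r_disjoint dinf i (V i))
        \<and> Lomega \<subseteq> \<Union>(\<Union>i\<in>\<sigma>. V i)"
    then obtain V :: "nat \<Rightarrow> int list set set" where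
      VQ: "(\<forall>i\<in>\<sigma>. V i \<subseteq> Pow Lomega \<and> unif_bounded dinf (V i) \<and> r_disjoint dinf i (V i))
        \<and> Lomega \<subseteq> \<Union>(\<Union>i\<in>\<sigma>. V i)" by (rule exE)
    note V = conjunct1[OF VQ] and cov = conjunct2[OF VQ]
    have "\<forall>i\<in>\<sigma>. \<exists>c. 0 < c \<and> (\<forall>A\<in>V i. \<forall>x\<in>A. \<forall>y\<in>A. dinf x y \<le> c)"
    proof
      fix i assume "i \<in> \<sigma>"
      then have "unif_bounded dinf (V i)" using V by blast
      then show "\<exists>c. 0 < c \<and> (\<forall>A\<in>V i. \<forall>x\<in>A. \<forall>y\<in>A. dinf x y \<le> c)"
        unfolding unif_bounded_def by blast
    qed
    then have "\<exists>C. \<forall>i\<in>\<sigma>. 0 < C i \<and> (\<forall>A\<in>V i. \<forall>x\<in>A. \<forall>y\<in>A. dinf x y \<le> C i)"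
      by (rule bchoice)
    then obtain C where C: "\<forall>i\<in>\<sigma>. 0 < C i \<and> (\<forall>A\<in>V i. \<forall>x\<in>A. \<forall>y\<in>A. dinf x y \<le> C i)"
      by (rule exE)
    define Cb where "Cb = nat (\<Sum>i\<in>\<sigma>. C i)"
    have CCb: "C i \<le> int Cb" if "i \<in> \<sigma>" for i
    proof -
      have "C i \<le> (\<Sum>i\<in>\<sigma>. C i)" using that C by (intro member_le_sum) (auto simp: \<sigma>_def less_imp_le)
      moreover have "0 \<le> (\<Sum>i\<in>\<sigma>. C i)" using C by (intro sum_nonneg) (auto simp: less_imp_le)
      ultimately show ?thesis by (simp add: Cb_def)
    qed
    define h where "h = Cb + 5"
    define p where "p = 2 * h"
    define emb :: "(nat \<Rightarrow> nat) \<Rightarrow> int list" where "emb x = map (\<lambda>j. int m * int (x j)) [0..<m]" for x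
    have embL: "emb x \<in> Lomega" for x using m by (auto simp: emb_def Lomega_def)
    have pademb: "pad (emb x) j = int m * int (x j)" if "j < m" for x j
      using that by (simp add: pad_def emb_def)
    define gd where "gd x y k \<longleftrightarrow> (\<forall>j<m. \<bar>int (x j) - int (y j)\<bar> \<le> int k)" for x y :: "nat \<Rightarrow> nat" and k :: nat
    have embclose: "dinf (emb x) (emb y) \<le> int m * int k" if "gd x y k" for x y k
    proof -
      have "supdist (emb x) (emb y) \<le> int m * int k"
      proof (rule supdist_le)
        show "0 \<le> int m * int k" by simp
        fix j assume "j < length (emb y)"
        then have j: "j < m" by (simp add: emb_def)
        have "\<bar>emb x ! j - emb y ! j\<bar> = int m * \<bar>int (x j) - int (y j)\<bar>"
          using j by (simp add: emb_def abs_mult flip: right_diff_distrib)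
        also have "\<dots> \<le> int m * int k" using that j unfolding gd_def by (intro mult_left_mono) auto
        finally show "\<bar>emb x ! j - emb y ! j\<bar> \<le> int m * int k" .
      qed
      moreover have "length (emb x) = length (emb y)" by (simp add: emb_def)
      ultimately show ?thesis using dinf_same_len by simp
    qed
    have gdtri: "gd x z 2" if "gd x y 1" "gd y z 1" for x y z
      using that unfolding gd_def by force
    have gdsym: "gd y x k" if "gd x y k" for x y k
      using that unfolding gd_def by (simp add: abs_minus_commute)
    define P where "P j = {x. \<exists>A\<in>V (2*m+1+j). emb x \<in> A \<and> (\<exists>z\<in>A. pad z j \<le> int m * int h)}" for j
    define N where "N j = {x. \<exists>A\<in>V (2*m+1+j). emb x \<in> A \<and> (\<forall>z\<in>A. int m * int h < pad z j)}" for j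
    have idx: "2*m+1+j \<in> \<sigma>" if "j < m" for j using that by (simp add: \<sigma>_def)
    have PN: False if j: "j < m" and x: "x \<in> P j" and y: "y \<in> N j" and g: "gd x y 2" for j x y
    proof -
      obtain A1 z where A1: "A1 \<in> V (2*m+1+j)" "emb x \<in> A1" "z \<in> A1" "pad z j \<le> int m * int h"
        using x by (auto simp: P_def)
      obtain A2 where A2: "A2 \<in> V (2*m+1+j)" "emb y \<in> A2" "\<forall>z\<in>A2. int m * int h < pad z j"
        using y by (auto simp: N_def)
      show False
      proof (cases "A1 = A2")
        case True then show False using A1 A2 by force
      next
        case False
        have "r_disjoint dinf (2*m+1+j) (V (2*m+1+j))" using V idx[OF j] by blast
        then have "int (2*m+1+j) \<le> dinf (emb x) (emb y)"
          unfolding r_disjoint_def using A1 A2 False by blast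
        moreover have "dinf (emb x) (emb y) \<le> int m * int 2" using embclose[OF g] .
        ultimately show False by simp
      qed
    qed
    have Pb: "x j \<le> h + Cb" if j: "j < m" and x: "x \<in> P j" for j x
    proof -
      obtain A z where A: "A \<in> V (2*m+1+j)" "emb x \<in> A" "z \<in> A" "pad z j \<le> int m * int h"
        using x by (auto simp: P_def)
      have "dinf (emb x) z \<le> C (2*m+1+j)" using C idx[OF j] A by blast
      also have "\<dots> \<le> int Cb" using CCb idx[OF j] by blast
      finally have "\<bar>pad (emb x) j - pad z j\<bar> \<le> int Cb" using dinf_ge_pad[of "emb x" j z] by linarith
      then have "int m * int (x j) \<le> int m * int h + int Cb" using A(4) pademb[OF j, of x] by linarith
      also have "\<dots> \<le> int m * int h + int m * int Cb"
      proof -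
        have "Cb \<le> m * Cb" using mult_le_mono1[OF m, of Cb] by simp
        then have "int Cb \<le> int m * int Cb" by (metis of_nat_le_iff of_nat_mult)
        then show ?thesis by linarith
      qed
      finally have "int m * int (x j) \<le> int m * int (h + Cb)" by (simp add: algebra_simps)
      then have "int (x j) \<le> int (h + Cb)" using m by (simp add: mult_le_cancel_left_pos)
      then show ?thesis by linarith
    qed
    have Nb: "h < y j" if j: "j < m" and y: "y \<in> N j" for j y
    proof -
      obtain A where A: "A \<in> V (2*m+1+j)" "emb y \<in> A" "\<forall>z\<in>A. int m * int h < pad z j"
        using y by (auto simp: N_def)
      then have "int m * int h < int m * int (y j)" using pademb[OF j] by force
      then show ?thesis using m by (simp add: mult_less_cancel_left_pos)
    qed
    define nearP where "nearP x i \<longleftrightarrow> (\<exists>y. gd x y 1 \<and> y \<in> P i)" for x i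
    define nearN where "nearN x i \<longleftrightarrow> (\<exists>y. gd x y 1 \<and> y \<in> N i)" for x i
    define label where "label x i = (if nearN x i \<or> (x i = p \<and> \<not> nearP x i) then 1 else (0::nat))" for x i
    have p0: "0 < p" by (simp add: p_def h_def)
    obtain q where q1: "\<forall>i<m. q i < p"
      and q2: "\<forall>i<m. \<exists>r s. (\<forall>j<m. q j \<le> r j \<and> r j \<le> q j + 1) \<and> (\<forall>j<m. q j \<le> s j \<and> s j \<le> q j + 1) \<and> label r i \<noteq> label s i"
    proof (rule kuhn_lemma[OF p0])
      show "\<forall>x. (\<forall>i<m. x i \<le> p) \<longrightarrow> (\<forall>i<m. label x i = 0 \<or> label x i = 1)"
        by (simp add: label_def)
      show "\<forall>x. (\<forall>i<m. x i \<le> p) \<longrightarrow> (\<forall>i<m. x i = 0 \<longrightarrow> label x i = 0)"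
      proof (intro allI impI)
        fix x :: "nat \<Rightarrow> nat" and i assume i: "i < m" and x0: "x i = 0"
        have "\<not> nearN x i"
        proof
          assume "nearN x i"
          then obtain y where y: "gd x y 1" "y \<in> N i" by (auto simp: nearN_def)
          have "h < y i" using Nb[OF i y(2)] .
          moreover have "\<bar>int (x i) - int (y i)\<bar> \<le> 1" using y(1) i by (simp add: gd_def)
          ultimately show False using x0 by (simp add: h_def)
        qed
        then show "label x i = 0" using x0 p0 by (simp add: label_def)
      qed
      show "\<forall>x. (\<forall>i<m. x i \<le> p) \<longrightarrow> (\<forall>i<m. x i = p \<longrightarrow> label x i = 1)"
      proof (intro allI impI)
        fix x :: "nat \<Rightarrow> nat" and i assume i: "i < m" and xp: "x i = p"
        have "\<not> nearP x i"
        proof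
          assume "nearP x i"
          then obtain y where y: "gd x y 1" "y \<in> P i" by (auto simp: nearP_def)
          have "y i \<le> h + Cb" using Pb[OF i y(2)] .
          moreover have "\<bar>int (x i) - int (y i)\<bar> \<le> 1" using y(1) i by (simp add: gd_def)
          ultimately show False using xp by (simp add: p_def h_def)
        qed
        then show "label x i = 1" using xp by (simp add: label_def)
      qed
    qed
    have cubegd: "gd r q 1" if "\<forall>j<m. q j \<le> r j \<and> r j \<le> q j + 1" for r
      using that unfolding gd_def by force
    obtain i A where iA: "i \<in> \<sigma>" "A \<in> V i" "emb q \<in> A" using cov embL[of q] by blast
    define j where "j = i - (2*m+1)"
    have j: "j < m" "2*m+1+j = i" using iA(1) m by (auto simp: j_def \<sigma>_def)
    obtain r s where rs: "\<forall>j'<m. q j' \<le> r j' \<and> r j' \<le> q j' + 1" "\<forall>j'<m. q j' \<le> s j' \<and> s j' \<le> q j' + 1"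
      "label r j \<noteq> label s j" using q2 j(1) by blast
    show False
    proof (cases "\<exists>z\<in>A. pad z j \<le> int m * int h")
      case True
      then have qP: "q \<in> P j" using iA j(2) by (auto simp: P_def)
      have "label t j = 0" if t: "\<forall>j'<m. q j' \<le> t j' \<and> t j' \<le> q j' + 1" for t
      proof -
        have g: "gd t q 1" using cubegd[OF t] .
        have "nearP t j" using g qP by (auto simp: nearP_def)
        moreover have "\<not> nearN t j"
        proof
          assume "nearN t j"
          then obtain y where y: "gd t y 1" "y \<in> N j" by (auto simp: nearN_def)
          show False using PN[OF j(1) qP y(2) gdtri[OF gdsym[OF g] y(1)]] .
        qed
        ultimately show ?thesis by (simp add: label_def)
      qed
      then show False using rs by metis
    next
      case False
      then have qN: "q \<in> N j" using iA j(2) by (auto simp: N_def not_le)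
      have "label t j = 1" if t: "\<forall>j'<m. q j' \<le> t j' \<and> t j' \<le> q j' + 1" for t
      proof -
        have "nearN t j" using cubegd[OF t] qN by (auto simp: nearN_def)
        then show ?thesis by (simp add: label_def)
      qed
      then show False using rs by metis
    qed
  qed
  then show ?thesis using sF unfolding Aset_def \<sigma>_def by blast
qed



theorem theorem2:
  shows "trasdim_eq_omega Lomega dinf"
proof -
  let ?A = "Aset Lomega dinf"
  have AF: "?A \<subseteq> Fin Npos" by (auto simp: Aset_def)
  have unb: "\<not> bounded_space Lomega dinf"
  proof
    assume "bounded_space Lomega dinf"
    then obtain C where C: "\<forall>x\<in>Lomega. \<forall>y\<in>Lomega. dinf x y \<le> C" by (auto simp: bounded_space_def)
    define k where "k = \<bar>C\<bar> + 1"
    have L: "[0] \<in> Lomega" "[k] \<in> Lomega" by (auto simp: Lomega_def)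
    have "\<bar>pad [0] 0 - pad [k] 0\<bar> \<le> dinf [0] [k]" by (rule dinf_ge_pad)
    then have "\<bar>k\<bar> \<le> dinf [0] [k]" by (simp add: pad_def)
    moreover have "dinf [0] [k] \<le> C" using C L by blast
    ultimately show False by (simp add: k_def)
  qed
  have le: "Ord_le Npos ?A (\<infinity>::enat)"
  proof (rule Ord_le.step, intro ballI exI conjI)
    fix a assume a: "a \<in> Npos"
    show "enat (2 ^ a) < \<infinity>" by simp
    show "Ord_le Npos (Mup Npos ?A {a}) (enat (2 ^ a))"
    proof (rule Ord_le_card[OF Mup_Fin], intro ballI)
      fix \<tau> assume t: "\<tau> \<in> Mup Npos ?A {a}"
      then have t1: "{a} \<union> \<tau> \<in> ?A" "a \<notin> \<tau>" "finite \<tau>" by (auto simp: Mup_def Fin_def)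
      show "card \<tau> \<le> 2 ^ a"
      proof (rule ccontr)
        assume "\<not> card \<tau> \<le> 2 ^ a"
        then have "2 ^ a < card ({a} \<union> \<tau>)" using t1 by simp
        moreover have "{a} \<union> \<tau> \<in> Fin Npos" using t1(1) AF by blast
        ultimately have "{a} \<union> \<tau> \<notin> ?A" by (intro not_in_Aset) auto
        then show False using t1(1) by blast
      qed
    qed
  qed
  have nlt: "\<not> Ord_lt Npos ?A (\<infinity>::enat)"
  proof
    assume "Ord_lt Npos ?A (\<infinity>::enat)"
    then obtain \<beta> :: enat where b: "\<beta> < \<infinity>" "Ord_le Npos ?A \<beta>" by (auto simp: Ord_lt_def)
    then obtain n where n: "\<beta> = enat n" by (cases \<beta>) auto
    have all: "\<forall>\<tau>\<in>?A. enat (card \<tau>) \<le> \<beta>" using Ord_le_card_conv[OF b(2) AF] .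
    have "{2*(n+1)+1..3*(n+1)} \<in> ?A" by (rule in_Aset) simp
    moreover have "card {2*(n+1)+1..3*(n+1)} = n + 1" by simp
    ultimately show False using all n by fastforce
  qed
  show ?thesis using unb le nlt by (simp add: trasdim_eq_omega_def Ord_eq_def)
qed


end
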